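(* There is an open set $U\subset\bigcup_{k\in\mathbb Z}\Sigma^1_k$ such that: - $U\cap\Sigma^1_k\neq\emptyset$ for every $k\in\mathbb Z$; - $K_1(u)\neq0$ for all $u\in U$, where $K_1(u):=\int_0^1\cos(u)\,\partial_x^{-1}\sin(u)\,dx$.
   Context: $\mathbb T=\mathbb R/\mathbb Z$, $H^m=H^m(\mathbb T,\mathbb R)$, $H_0^m$ is its mean-zero subspace, and $\partial_x^{-1}$ is the mean-zero antiderivative. For $k\in\mathbb Z$, $\Lambda^1_k$ is the set of $u:\mathbb R\to\mathbb R$ of the form $u(x)=2\pi kx+\mathring u(x)+c$ with $\mathring u\in H_0^1$ ($1$-periodically extended) and $c\in\mathbb R/2\pi\mathbb Z$; $k$ is called the topological charge. We set \[ \Sigma^1_k=\Big\{u\in\Lambda^1_k:\int_0^1\sin u\,dx=0=\int_0^1\cos u\,dx\Big\}, \] topologized as a subset of $\Lambda^1_k$, and the union over $k$ carries the disjoint-union topology. For $u\in\Sigma^1_k$, $\sin u$ has mean zero, so $\partial_x^{-1}\sin u$ is defined. *)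

theory Defs
  imports "HOL-Analysis.Analysis"
begin

definition int01 :: "(real \<Rightarrow> real) \<Rightarrow> real" where
  "int01 f = (LBINT x=ereal 0..ereal 1. f x)"

definition has_weak_deriv01 :: "(real \<Rightarrow> real) \<Rightarrow> (real \<Rightarrow> real) \<Rightarrow> bool" where
  "has_weak_deriv01 f g \<longleftrightarrow>
     set_borel_measurable lborel {0..1} g \<and>
     set_integrable lborel {0..1} (\<lambda>t. (g t)\<^sup>2) \<and>
     (\<forall>x\<in>{0..1}. f x = f 0 + (LBINT t=ereal 0..ereal x. g t))"

definition wderiv01 :: "(real \<Rightarrow> real) \<Rightarrow> real \<Rightarrow> real" where
  "wderiv01 f = (SOME g. has_weak_deriv01 f g)"

definition H1 :: "(real \<Rightarrow> real) set" where
  "H1 = {v. (\<forall>x. v (x + 1) = v x) \<and> (\<exists>g. has_weak_deriv01 v g)}"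

definition H1_0 :: "(real \<Rightarrow> real) set" where
  "H1_0 = {v \<in> H1. int01 v = 0}"

definition H1_norm :: "(real \<Rightarrow> real) \<Rightarrow> real" where
  "H1_norm f = sqrt (int01 (\<lambda>x. (f x)\<^sup>2) + int01 (\<lambda>x. (wderiv01 f x)\<^sup>2))"

text \<open>Lambda^1_k: u x = 2 pi k x + v x + c with v in H^1_0 and c real
  (c is only relevant modulo 2 pi; see the pseudo-distance below).\<close>
definition Lambda1 :: "int \<Rightarrow> (real \<Rightarrow> real) set" where
  "Lambda1 k = {u. \<exists>v c. v \<in> H1_0 \<and> (\<forall>x. u x = 2 * pi * of_int k * x + v x + c)}"

definition Sigma1 :: "int \<Rightarrow> (real \<Rightarrow> real) set" where
  "Sigma1 k = {u \<in> Lambda1 k. int01 (\<lambda>x. sin (u x)) = 0 \<and> int01 (\<lambda>x. cos (u x)) = 0}"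

definition const_part :: "int \<Rightarrow> (real \<Rightarrow> real) \<Rightarrow> real" where
  "const_part k u = int01 (\<lambda>x. u x - 2 * pi * of_int k * x)"

definition osc_part :: "int \<Rightarrow> (real \<Rightarrow> real) \<Rightarrow> real \<Rightarrow> real" where
  "osc_part k u = (\<lambda>x. u x - 2 * pi * of_int k * x - const_part k u)"

text \<open>Distance on Lambda1 k \<cong> H^1_0 \<times> R/2piZ (product topology; the
  circle R/2piZ is embedded in C via c \<mapsto> e^{ic}).\<close>
definition Lambda1_dist :: "int \<Rightarrow> (real \<Rightarrow> real) \<Rightarrow> (real \<Rightarrow> real) \<Rightarrow> real" where
  "Lambda1_dist k u w =
     H1_norm (\<lambda>x. osc_part k u x - osc_part k w x)
     + cmod (cis (const_part k u) - cis (const_part k w))"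

text \<open>U is open in the disjoint union of the Sigma1 k (each with the subspace
  topology from Lambda1 k).\<close>
definition open_in_Sigma :: "(real \<Rightarrow> real) set \<Rightarrow> bool" where
  "open_in_Sigma U \<longleftrightarrow>
     U \<subseteq> (\<Union>k. Sigma1 k) \<and>
     (\<forall>k. \<forall>u\<in>U \<inter> Sigma1 k. \<exists>e>0. \<forall>w\<in>Sigma1 k. Lambda1_dist k u w < e \<longrightarrow> w \<in> U)"

definition antideriv0 :: "(real \<Rightarrow> real) \<Rightarrow> real \<Rightarrow> real" where
  "antideriv0 f x = (LBINT t=ereal 0..ereal x. f t) - int01 (\<lambda>y. LBINT t=ereal 0..ereal y. f t)"

definition K1 :: "(real \<Rightarrow> real) \<Rightarrow> real" where
  "K1 u = int01 (\<lambda>x. cos (u x) * antideriv0 (\<lambda>t. sin (u t)) x)"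

end

theory Submission
  imports Defs
begin

lemma hwd_integrable:
  assumes "has_weak_deriv01 v g"
  shows "set_integrable lborel {0..1::real} g"
proof -
  have m: "set_borel_measurable lborel {0..1} g" and s: "set_integrable lborel {0..1::real} (\<lambda>t. (g t)\<^sup>2)"
    using assms unfolding has_weak_deriv01_def by auto
  have c: "set_integrable lborel {0..1::real} (\<lambda>t. 1::real)"
    by (rule borel_integrable_atLeastAtMost') (intro continuous_intros)
  have "set_integrable lborel {0..1::real} (\<lambda>t. 1 + (g t)\<^sup>2)"
    using c s by (rule set_integral_add)
  then show ?thesis
  proof (rule set_integrable_bound)
    show "set_borel_measurable lborel {0..1} g" by (rule m)
    have "\<And>x::real. \<bar>x\<bar> \<le> \<bar>1 + x\<^sup>2\<bar>"
      proof -
      fix x :: real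
      show "\<bar>x\<bar> \<le> \<bar>1 + x\<^sup>2\<bar>"
      proof (cases "\<bar>x\<bar> \<le> 1")
        case True then show ?thesis by (smt (verit) zero_le_power2)
      next
        case False
        then have "\<bar>x\<bar> * 1 \<le> \<bar>x\<bar> * \<bar>x\<bar>" by (intro mult_left_mono) auto
        then show ?thesis by (simp add: power2_eq_square abs_mult_self)
      qed
    qed
    then show "AE x in lborel. x \<in> {0..1} \<longrightarrow> norm (g x) \<le> norm (1 + (g x)\<^sup>2)" by auto
  qed
qed

lemma LBINT_eq_integral:
  fixes g :: "real \<Rightarrow> real"
  assumes "set_integrable lborel {0..1::real} g" "x \<in> {0..1}"
  shows "(LBINT t=ereal 0..ereal x. g t) = integral {0..x} g"
proof -
  have "set_integrable lborel {0..x} g"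
    by (rule set_integrable_subset[OF assms(1)]) (use assms(2) in auto)
  moreover have "0 \<le> x" using assms(2) by simp
  ultimately show ?thesis by (rule interval_integral_eq_integral[of 0 x g, rotated])
qed


lemma hwd_cont:
  assumes "has_weak_deriv01 v g"
  shows "continuous_on {0..1} v"
proof -
  have gi: "set_integrable lborel {0..1::real} g" by (rule hwd_integrable[OF assms])
  have "g integrable_on {0..1}" using set_borel_integral_eq_integral(1)[OF gi] .
  then have c: "continuous_on {0..1} (\<lambda>x. v 0 + integral {0..x} g)"
    by (intro continuous_on_add continuous_on_const indefinite_integral_continuous_1)
  have eq: "\<forall>x\<in>{0..1}. v x = v 0 + (LBINT t=ereal 0..ereal x. g t)"
    using assms unfolding has_weak_deriv01_def by blast
  show ?thesis
  proof (rule continuous_on_cong[THEN iffD1, OF refl _ c])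
    fix x :: real assume x: "x \<in> {0..1}"
    have "v x = v 0 + (LBINT t=ereal 0..ereal x. g t)" using eq x by blast
    also have "\<dots> = v 0 + integral {0..x} g" using LBINT_eq_integral[OF gi x] by (rule arg_cong)
    finally show "v 0 + integral {0..x} g = v x" by (rule sym)
  qed
qed


lemma incr_bound:
  fixes g :: "real \<Rightarrow> real"
  assumes gi: "g integrable_on {0..1}" and ga: "(\<lambda>t. \<bar>g t\<bar>) integrable_on {0..1}"
    and ab: "0 \<le> a" "a \<le> b" "b \<le> 1"
  shows "\<bar>integral {0..b} g - integral {0..a} g\<bar> \<le> integral {0..1} (\<lambda>t. \<bar>g t\<bar>)"
proof -
  have gb: "g integrable_on {0..b}" by (rule integrable_on_subinterval[OF gi]) (use ab in auto)
  have "integral {0..a} g + integral {a..b} g = integral {0..b} g"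
    by (rule Henstock_Kurzweil_Integration.integral_combine[OF ab(1,2) gb])
  then have "integral {0..b} g - integral {0..a} g = integral {a..b} g" by simp
  moreover have "\<bar>integral {a..b} g\<bar> \<le> integral {a..b} (\<lambda>t. \<bar>g t\<bar>)"
    using integral_norm_bound_integral[of g "{a..b}" "\<lambda>t. \<bar>g t\<bar>"]
      integrable_on_subinterval[OF gi, of a b] integrable_on_subinterval[OF ga, of a b] ab by simp
  moreover have "integral {a..b} (\<lambda>t. \<bar>g t\<bar>) \<le> integral {0..1} (\<lambda>t. \<bar>g t\<bar>)"
    by (rule integral_subset_le) (use ab integrable_on_subinterval[OF ga, of a b] ga in auto)
  ultimately show ?thesis by linarith
qed

lemma sup_bound:
  fixes d g :: "real \<Rightarrow> real"
  assumes hw: "has_weak_deriv01 d g" and m0: "int01 d = 0" and x: "x \<in> {0..1}"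
  shows "\<bar>d x\<bar> \<le> sqrt (int01 (\<lambda>t. (g t)\<^sup>2))"
proof -
  have gs: "set_integrable lborel {0..1::real} g" by (rule hwd_integrable[OF hw])
  have gi: "g integrable_on {0..1}" using set_borel_integral_eq_integral(1)[OF gs] .
  have ga: "(\<lambda>t. \<bar>g t\<bar>) integrable_on {0..1}"
    using set_borel_integral_eq_integral(1)[OF set_integrable_abs[OF gs]] .
  have g2s: "set_integrable lborel {0..1::real} (\<lambda>t. (g t)\<^sup>2)" using hw unfolding has_weak_deriv01_def by blast
  have g2: "(\<lambda>t. (g t)\<^sup>2) integrable_on {0..1}" using set_borel_integral_eq_integral(1)[OF g2s] .
  have G: "int01 (\<lambda>t. (g t)\<^sup>2) = integral {0..1} (\<lambda>t. (g t)\<^sup>2)"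
    unfolding int01_def using LBINT_eq_integral[OF g2s, of 1] by simp
  define m where "m = integral {0..1} (\<lambda>t. \<bar>g t\<bar>)"
  have m_nn: "0 \<le> m" unfolding m_def by (rule integral_nonneg[OF ga]) auto
  have eq: "\<forall>y\<in>{0..1}. d y = d 0 + (LBINT t=ereal 0..ereal y. g t)"
    using hw unfolding has_weak_deriv01_def by blast
  have deq: "d y = d 0 + integral {0..y} g" if "y \<in> {0..1}" for y
  proof -
    have "d y = d 0 + (LBINT t=ereal 0..ereal y. g t)" using eq that by blast
    also have "\<dots> = d 0 + integral {0..y} g" using LBINT_eq_integral[OF gs that] by (rule arg_cong)
    finally show ?thesis .
  qed
  have c1: "\<bar>d x - d y\<bar> \<le> m" if y: "y \<in> {0..1}" for y
  proof (cases "y \<le> x")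
    case True
    have "d x - d y = integral {0..x} g - integral {0..y} g" using deq[OF x] deq[OF y] by simp
    then show ?thesis unfolding m_def using incr_bound[OF gi ga, of y x] True x y by simp
  next
    case False
    have "d x - d y = - (integral {0..y} g - integral {0..x} g)" using deq[OF x] deq[OF y] by simp
    then show ?thesis unfolding m_def using incr_bound[OF gi ga, of x y] False x y by simp
  qed
  have dc: "continuous_on {0..1} d" by (rule hwd_cont[OF hw])
  have ds: "set_integrable lborel {0..1::real} d" by (rule borel_integrable_atLeastAtMost'[OF dc])
  have di: "d integrable_on {0..1}" using set_borel_integral_eq_integral(1)[OF ds] .
  have "int01 d = integral {0..1} d" unfolding int01_def using LBINT_eq_integral[OF ds, of 1] by simp
  then have id0: "integral {0..1} d = 0" using m0 by simp
  have i1: "(\<lambda>y. d x - d y) integrable_on {0..1}" by (intro integrable_diff integrable_const_ivl di)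
  have "integral {0..1} (\<lambda>y. d x - d y) = d x"
    using integral_diff[OF integrable_const_ivl[of "d x" "0::real" 1] di] id0 by simp
  moreover have "norm (integral {0..1} (\<lambda>y. d x - d y)) \<le> integral {0..1} (\<lambda>y::real. m)"
  proof (rule Henstock_Kurzweil_Integration.integral_norm_bound_integral[OF i1])
    show "(\<lambda>y::real. m) integrable_on {0..1}" by (rule integrable_const_ivl)
    fix y :: real assume "y \<in> {0..1}"
    then show "norm (d x - d y) \<le> m" using c1 by (simp only: real_norm_def)
  qed
  moreover have "integral {0..1} (\<lambda>y::real. m) = m" by simp
  ultimately have dm: "\<bar>d x\<bar> \<le> m" by simp
  have ex: "((\<lambda>t. (g t)\<^sup>2 - 2 * m * \<bar>g t\<bar> + m\<^sup>2) has_integral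
      (integral {0..1} (\<lambda>t. (g t)\<^sup>2) - 2 * m * m + m\<^sup>2)) {0..1}"
  proof -
    have a: "((\<lambda>t. (g t)\<^sup>2) has_integral integral {0..1} (\<lambda>t. (g t)\<^sup>2)) {0..1}"
      using g2 by (rule integrable_integral)
    have b: "((\<lambda>t. 2 * m * \<bar>g t\<bar>) has_integral (2 * m * m)) {0..1}"
      unfolding m_def by (rule has_integral_mult_right) (rule integrable_integral[OF ga])
    have c: "((\<lambda>t. m\<^sup>2) has_integral m\<^sup>2) {0..1::real}"
      using has_integral_const_real[of "m\<^sup>2" 0 1] by simp
    show ?thesis by (rule has_integral_add[OF has_integral_diff[OF a b] c])
  qed
  have "0 \<le> integral {0..1} (\<lambda>t. (g t)\<^sup>2 - 2 * m * \<bar>g t\<bar> + m\<^sup>2)"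
  proof (rule integral_nonneg)
    show "(\<lambda>t. (g t)\<^sup>2 - 2 * m * \<bar>g t\<bar> + m\<^sup>2) integrable_on {0..1}" using ex by blast
    fix t :: real
    have "0 \<le> (\<bar>g t\<bar> - m)\<^sup>2" by simp
    also have "\<dots> = (g t)\<^sup>2 - 2 * m * \<bar>g t\<bar> + m\<^sup>2" by (simp add: power2_eq_square algebra_simps)
    finally show "0 \<le> (g t)\<^sup>2 - 2 * m * \<bar>g t\<bar> + m\<^sup>2" .
  qed
  then have "m\<^sup>2 \<le> integral {0..1} (\<lambda>t. (g t)\<^sup>2)" using integral_unique[OF ex] by (simp add: power2_eq_square)
  then have "m \<le> sqrt (int01 (\<lambda>t. (g t)\<^sup>2))" using G by (simp add: real_le_rsqrt)
  with dm show ?thesis by linarith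
qed


lemma cis_diff_le: "cmod (cis a - cis b) \<le> \<bar>a - b\<bar>"
proof -
  have "(cmod (cis a - cis b))\<^sup>2 = (cos a - cos b)\<^sup>2 + (sin a - sin b)\<^sup>2"
    by (simp add: cmod_power2)
  also have "\<dots> = ((sin a)\<^sup>2 + (cos a)\<^sup>2) + ((sin b)\<^sup>2 + (cos b)\<^sup>2) - 2 * (cos a * cos b + sin a * sin b)"
    by (simp add: power2_eq_square algebra_simps)
  also have "\<dots> = 2 - 2 * cos (a - b)" by (simp only: sin_cos_squared_add cos_diff)
  also have "cos (a - b) = 1 - 2 * (sin ((a - b) / 2))\<^sup>2"
  proof -
    have "a - b = 2 * ((a - b) / 2)" by simp
    then have "cos (a - b) = cos (2 * ((a - b) / 2))" by (rule arg_cong)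
    then show ?thesis using cos_double_sin[of "(a - b) / 2"] by (simp only:)
  qed
  also have "2 - 2 * (1 - 2 * (sin ((a - b) / 2))\<^sup>2) = 4 * (sin ((a - b) / 2))\<^sup>2" by simp
  also have "\<dots> \<le> 4 * ((a - b) / 2)\<^sup>2"
  proof -
    have "(sin ((a - b) / 2))\<^sup>2 \<le> ((a - b) / 2)\<^sup>2"
      using abs_sin_x_le_abs_x[of "(a - b) / 2"] abs_le_square_iff by blast
    then show ?thesis by simp
  qed
  also have "\<dots> = (\<bar>a - b\<bar>)\<^sup>2" by (simp add: power2_eq_square)
  finally show ?thesis by (rule power2_le_imp_le) simp
qed

lemma hwd_shift:
  assumes "has_weak_deriv01 v g"
  shows "has_weak_deriv01 (\<lambda>x. v x + a) g"
proof -
  have "\<forall>x\<in>{0..1}. v x = v 0 + (LBINT t=ereal 0..ereal x. g t)"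
    and r: "set_borel_measurable lborel {0..1} g \<and> set_integrable lborel {0..1} (\<lambda>t. (g t)\<^sup>2)"
    using assms unfolding has_weak_deriv01_def by blast+
  then have "\<forall>x\<in>{0..1}. v x + a = (v 0 + a) + (LBINT t=ereal 0..ereal x. g t)"
    by (metis add.commute add.left_commute)
  then show ?thesis using r unfolding has_weak_deriv01_def by blast
qed

lemma sbm_diff:
  fixes f g :: "real \<Rightarrow> real"
  assumes "set_borel_measurable lborel A f" "set_borel_measurable lborel A g"
  shows "set_borel_measurable lborel A (\<lambda>x. f x - g x)"
proof -
  have "(\<lambda>x. indicator A x *\<^sub>R (f x - g x)) = (\<lambda>x. indicator A x *\<^sub>R f x - indicator A x *\<^sub>R g x)"
    by (simp add: algebra_simps)
  then show ?thesis using assms unfolding set_borel_measurable_def by (simp add: borel_measurable_diff)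
qed

lemma sbm_sq:
  fixes f :: "real \<Rightarrow> real"
  assumes "set_borel_measurable lborel A f"
  shows "set_borel_measurable lborel A (\<lambda>x. (f x)\<^sup>2)"
proof -
  have "(\<lambda>x. indicator A x *\<^sub>R (f x)\<^sup>2) = (\<lambda>x. (indicator A x *\<^sub>R f x) * (indicator A x *\<^sub>R f x))"
    by (auto simp: power2_eq_square indicator_def)
  then show ?thesis using assms unfolding set_borel_measurable_def by (simp add: borel_measurable_times)
qed

lemma hwd_diff:
  fixes f1 f2 g1 g2 :: "real \<Rightarrow> real"
  assumes h1: "has_weak_deriv01 f1 g1" and h2: "has_weak_deriv01 f2 g2"
  shows "has_weak_deriv01 (\<lambda>x. f1 x - f2 x) (\<lambda>x. g1 x - g2 x)"
proof -
  have m1: "set_borel_measurable lborel {0..1} g1" and s1: "set_integrable lborel {0..1::real} (\<lambda>t. (g1 t)\<^sup>2)"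
    and e1: "\<forall>x\<in>{0..1}. f1 x = f1 0 + (LBINT t=ereal 0..ereal x. g1 t)"
    using h1 unfolding has_weak_deriv01_def by blast+
  have m2: "set_borel_measurable lborel {0..1} g2" and s2: "set_integrable lborel {0..1::real} (\<lambda>t. (g2 t)\<^sup>2)"
    and e2: "\<forall>x\<in>{0..1}. f2 x = f2 0 + (LBINT t=ereal 0..ereal x. g2 t)"
    using h2 unfolding has_weak_deriv01_def by blast+
  have m: "set_borel_measurable lborel {0..1} (\<lambda>x. g1 x - g2 x)" by (rule sbm_diff[OF m1 m2])
  have "set_integrable lborel {0..1::real} (\<lambda>t. 2 * (g1 t)\<^sup>2 + 2 * (g2 t)\<^sup>2)"
    using s1 s2 by (intro set_integral_add set_integrable_mult_right)
  then have s: "set_integrable lborel {0..1::real} (\<lambda>t. (g1 t - g2 t)\<^sup>2)"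
  proof (rule set_integrable_bound)
    show "set_borel_measurable lborel {0..1} (\<lambda>t. (g1 t - g2 t)\<^sup>2)" by (rule sbm_sq[OF m])
    have "\<And>a b::real. \<bar>(a - b)\<^sup>2\<bar> \<le> \<bar>2 * a\<^sup>2 + 2 * b\<^sup>2\<bar>"
    proof -
      fix a b :: real
      have "0 \<le> (a + b)\<^sup>2" by simp
      then have "(a - b)\<^sup>2 \<le> 2 * a\<^sup>2 + 2 * b\<^sup>2" by (simp add: power2_eq_square algebra_simps)
      then show "\<bar>(a - b)\<^sup>2\<bar> \<le> \<bar>2 * a\<^sup>2 + 2 * b\<^sup>2\<bar>" by simp
    qed
    then have bnd: "\<And>x. norm ((g1 x - g2 x)\<^sup>2) \<le> norm (2 * (g1 x)\<^sup>2 + 2 * (g2 x)\<^sup>2)"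
      by (simp only: real_norm_def)
    show "AE x in lborel. x \<in> {0..1} \<longrightarrow> norm ((g1 x - g2 x)\<^sup>2) \<le> norm (2 * (g1 x)\<^sup>2 + 2 * (g2 x)\<^sup>2)"
      by (intro AE_I2 impI bnd)
  qed
  have gs1: "set_integrable lborel {0..1::real} g1" by (rule hwd_integrable[OF h1])
  have gs2: "set_integrable lborel {0..1::real} g2" by (rule hwd_integrable[OF h2])
  have gs: "set_integrable lborel {0..1::real} (\<lambda>t. g1 t - g2 t)" by (rule set_integral_diff(1)[OF gs1 gs2])
  have e: "f1 x - f2 x = (f1 0 - f2 0) + (LBINT t=ereal 0..ereal x. g1 t - g2 t)" if x: "x \<in> {0..1}" for x
  proof -
    have i1: "g1 integrable_on {0..x}"
      by (rule integrable_on_subinterval[OF set_borel_integral_eq_integral(1)[OF gs1]]) (use x in auto)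
    have i2: "g2 integrable_on {0..x}"
      by (rule integrable_on_subinterval[OF set_borel_integral_eq_integral(1)[OF gs2]]) (use x in auto)
    have "(LBINT t=ereal 0..ereal x. g1 t - g2 t) = integral {0..x} (\<lambda>t. g1 t - g2 t)"
      by (rule LBINT_eq_integral[OF gs x])
    also have "\<dots> = integral {0..x} g1 - integral {0..x} g2" by (rule integral_diff[OF i1 i2])
    also have "integral {0..x} g1 = (LBINT t=ereal 0..ereal x. g1 t)" by (rule LBINT_eq_integral[OF gs1 x, symmetric])
    also have "integral {0..x} g2 = (LBINT t=ereal 0..ereal x. g2 t)" by (rule LBINT_eq_integral[OF gs2 x, symmetric])
    finally have *: "(LBINT t=ereal 0..ereal x. g1 t - g2 t) = (LBINT t=ereal 0..ereal x. g1 t) - (LBINT t=ereal 0..ereal x. g2 t)" .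
    have A: "f1 x = f1 0 + (LBINT t=ereal 0..ereal x. g1 t)" using e1 x by blast
    have B: "f2 x = f2 0 + (LBINT t=ereal 0..ereal x. g2 t)" using e2 x by blast
    show ?thesis unfolding * using A B by linarith
  qed
  show ?thesis unfolding has_weak_deriv01_def using m s e by blast
qed

lemma int01_nonneg:
  assumes "\<And>x. 0 \<le> f x"
  shows "0 \<le> int01 f"
  unfolding int01_def interval_lebesgue_integral_def set_lebesgue_integral_def
  using assms by (auto intro!: integral_nonneg simp: indicator_def)

lemma int01_diff:
  fixes f g :: "real \<Rightarrow> real"
  assumes "continuous_on {0..1} f" "continuous_on {0..1} g"
  shows "int01 (\<lambda>x. f x - g x) = int01 f - int01 g"
  unfolding int01_def
  by (rule interval_lebesgue_integral_diff(2)) (use assms in \<open>auto intro!: interval_integrable_continuous_on\<close>)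


lemma lam_struct:
  assumes "u \<in> Lambda1 k"
  shows "continuous_on {0..1} u \<and> (\<exists>g. has_weak_deriv01 (osc_part k u) g) \<and>
         int01 (osc_part k u) = 0 \<and> continuous_on {0..1} (osc_part k u)"
proof -
  obtain v c where v: "v \<in> H1_0" and ue: "\<forall>x. u x = 2 * pi * of_int k * x + v x + c"
    using assms unfolding Lambda1_def by blast
  obtain g where hv: "has_weak_deriv01 v g" using v unfolding H1_0_def H1_def by blast
  have vc: "continuous_on {0..1} v" by (rule hwd_cont[OF hv])
  have ueq: "u = (\<lambda>x. 2 * pi * of_int k * x + v x + c)" using ue by (intro ext) blast
  have uc: "continuous_on {0..1} u" unfolding ueq by (intro continuous_intros vc)
  define cp where "cp = const_part k u"
  have oeq: "osc_part k u = (\<lambda>x. v x + (c - cp))"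
    unfolding osc_part_def cp_def[symmetric] using ue by (intro ext) simp
  have ho: "has_weak_deriv01 (osc_part k u) g" unfolding oeq by (rule hwd_shift[OF hv])
  have oc: "continuous_on {0..1} (osc_part k u)" unfolding oeq by (intro continuous_intros vc)
  have fc: "continuous_on {0..1} (\<lambda>x. u x - 2 * pi * of_int k * x)" by (intro continuous_intros uc)
  have "int01 (osc_part k u) = int01 (\<lambda>x. (u x - 2 * pi * of_int k * x) - cp)"
    unfolding osc_part_def cp_def by simp
  also have "\<dots> = int01 (\<lambda>x. u x - 2 * pi * of_int k * x) - int01 (\<lambda>x. cp)"
    by (rule int01_diff[OF fc continuous_on_const])
  also have "int01 (\<lambda>x. cp) = cp" unfolding int01_def by simp
  also have "int01 (\<lambda>x. u x - 2 * pi * of_int k * x) = cp" unfolding cp_def const_part_def ..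
  finally have "int01 (osc_part k u) = 0" by simp
  then show ?thesis using uc ho oc by blast
qed

lemma dist_pt:
  assumes u: "u \<in> Lambda1 k" and w: "w \<in> Lambda1 k" and x: "x \<in> {0..1}"
  shows "cmod (cis (u x) - cis (w x)) \<le> Lambda1_dist k u w"
proof -
  define ou where "ou = osc_part k u"
  define ow where "ow = osc_part k w"
  define d where "d = (\<lambda>x. ou x - ow x)"
  obtain gu where gu: "has_weak_deriv01 ou gu" using lam_struct[OF u] unfolding ou_def by blast
  obtain gw where gw: "has_weak_deriv01 ow gw" using lam_struct[OF w] unfolding ow_def by blast
  have "has_weak_deriv01 d (\<lambda>x. gu x - gw x)" unfolding d_def by (rule hwd_diff[OF gu gw])
  then have "\<exists>g. has_weak_deriv01 d g" by blast
  then have hG: "has_weak_deriv01 d (wderiv01 d)" unfolding wderiv01_def by (rule someI_ex)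
  have "int01 d = int01 ou - int01 ow" unfolding d_def
    by (rule int01_diff) (use lam_struct[OF u] lam_struct[OF w] in \<open>simp_all add: ou_def ow_def\<close>)
  then have d0: "int01 d = 0" using lam_struct[OF u] lam_struct[OF w] by (simp add: ou_def ow_def)
  have "\<bar>d x\<bar> \<le> sqrt (int01 (\<lambda>t. (wderiv01 d t)\<^sup>2))" by (rule sup_bound[OF hG d0 x])
  also have "\<dots> \<le> H1_norm d" unfolding H1_norm_def
    by (rule real_sqrt_le_mono) (simp add: int01_nonneg)
  finally have dx: "\<bar>d x\<bar> \<le> H1_norm d" .
  define cu where "cu = const_part k u"
  define cw where "cw = const_part k w"
  define A where "A = 2 * pi * of_int k * x + ou x"
  define B where "B = 2 * pi * of_int k * x + ow x"
  have "u x = A + cu" unfolding A_def cu_def ou_def osc_part_def by simp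
  then have cu': "cis (u x) = cis A * cis cu" by (simp add: cis_mult)
  have "w x = B + cw" unfolding B_def cw_def ow_def osc_part_def by simp
  then have cw': "cis (w x) = cis B * cis cw" by (simp add: cis_mult)
  have "cis (u x) - cis (w x) = (cis A - cis B) * cis cu + cis B * (cis cu - cis cw)"
    unfolding cu' cw' by (simp add: algebra_simps)
  then have "cmod (cis (u x) - cis (w x)) \<le> cmod ((cis A - cis B) * cis cu) + cmod (cis B * (cis cu - cis cw))"
    by (metis norm_triangle_ineq)
  also have "\<dots> = cmod (cis A - cis B) + cmod (cis cu - cis cw)" by (simp add: norm_mult)
  also have "cmod (cis A - cis B) \<le> \<bar>A - B\<bar>" by (rule cis_diff_le)
  also have "A - B = d x" unfolding A_def B_def d_def by simp
  finally have "cmod (cis (u x) - cis (w x)) \<le> \<bar>d x\<bar> + cmod (cis cu - cis cw)" by simp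
  also have "\<dots> \<le> Lambda1_dist k u w"
    unfolding Lambda1_dist_def cu_def[symmetric] cw_def[symmetric] ou_def[symmetric] ow_def[symmetric]
      d_def[symmetric] using dx by simp
  finally show ?thesis .
qed


lemma int01_cong:
  assumes "\<And>x. x \<in> {0..1} \<Longrightarrow> f x = g x"
  shows "int01 f = int01 g"
  unfolding int01_def
proof (rule interval_integral_cong)
  fix x assume "x \<in> einterval (min (ereal 0) (ereal 1)) (max (ereal 0) (ereal 1))"
  then have "x \<in> {0..1}" by (simp add: einterval_iff)
  then show "f x = g x" by (rule assms)
qed

lemma int01_integral:
  fixes f :: "real \<Rightarrow> real"
  assumes "continuous_on {0..1} f"
  shows "int01 f = integral {0..1} f"
  unfolding int01_def using LBINT_eq_integral[OF borel_integrable_atLeastAtMost'[OF assms], of 1] by simp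

lemma K1_form:
  assumes uc: "continuous_on {0..1} u"
  shows "K1 u = integral {0..1} (\<lambda>x. cos (u x) * (integral {0..x} (\<lambda>t. sin (u t))
              - integral {0..1} (\<lambda>y. integral {0..y} (\<lambda>t. sin (u t)))))"
proof -
  define S where "S = (\<lambda>t. sin (u t))"
  have Sc: "continuous_on {0..1} S" unfolding S_def by (intro continuous_intros uc)
  have Ss: "set_integrable lborel {0..1::real} S" by (rule borel_integrable_atLeastAtMost'[OF Sc])
  have Si: "S integrable_on {0..1}" by (rule integrable_continuous_interval[OF Sc])
  define I where "I = (\<lambda>x. integral {0..x} S)"
  have Ic: "continuous_on {0..1} I" unfolding I_def by (rule indefinite_integral_continuous_1[OF Si])
  have a: "(LBINT t=ereal 0..ereal x. S t) = I x" if "x \<in> {0..1}" for x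
    unfolding I_def by (rule LBINT_eq_integral[OF Ss that])
  have b: "int01 (\<lambda>y. LBINT t=ereal 0..ereal y. S t) = integral {0..1} I"
  proof -
    have "int01 (\<lambda>y. LBINT t=ereal 0..ereal y. S t) = int01 I" by (rule int01_cong) (rule a)
    also have "\<dots> = integral {0..1} I" by (rule int01_integral[OF Ic])
    finally show ?thesis .
  qed
  define M where "M = integral {0..1} I"
  have c: "antideriv0 S x = I x - M" if "x \<in> {0..1}" for x
    unfolding antideriv0_def M_def b[symmetric] using a[OF that] by simp
  have "K1 u = int01 (\<lambda>x. cos (u x) * antideriv0 S x)" unfolding K1_def S_def ..
  also have "\<dots> = int01 (\<lambda>x. cos (u x) * (I x - M))" by (rule int01_cong) (simp add: c)
  also have "\<dots> = integral {0..1} (\<lambda>x. cos (u x) * (I x - M))"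
    by (rule int01_integral) (intro continuous_intros uc Ic)
  finally show ?thesis unfolding I_def M_def S_def .
qed


lemma integral_bound01:
  fixes f :: "real \<Rightarrow> real"
  assumes "continuous_on {0..1} f" "\<And>t. t \<in> {0..1} \<Longrightarrow> \<bar>f t\<bar> \<le> B" "x \<in> {0..1}"
  shows "\<bar>integral {0..x} f\<bar> \<le> B"
proof -
  have B0: "0 \<le> B" using assms(2)[of 0] by auto
  have "norm (integral {0..x} f) \<le> B * (x - 0)"
    by (rule integral_bound) (use assms in \<open>auto intro: continuous_on_subset\<close>)
  also have "\<dots> \<le> B * 1" using assms(3) B0 by (intro mult_left_mono) auto
  finally show ?thesis by simp
qed

lemma K1_close:
  fixes u w :: "real \<Rightarrow> real"
  assumes uc: "continuous_on {0..1} u" and wc: "continuous_on {0..1} w"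
    and b: "\<And>x. x \<in> {0..1} \<Longrightarrow> cmod (cis (u x) - cis (w x)) \<le> \<delta>"
  shows "\<bar>K1 u - K1 w\<bar> \<le> 4 * \<delta>"
proof -
  have d0: "0 \<le> \<delta>" using b[of 0] by (meson atLeastAtMost_iff norm_ge_zero order_trans zero_le_one order_refl)
  have bc: "\<bar>cos (u x) - cos (w x)\<bar> \<le> \<delta>" if "x \<in> {0..1}" for x
    using abs_Re_le_cmod[of "cis (u x) - cis (w x)"] b[OF that] by simp
  have bs: "\<bar>sin (u x) - sin (w x)\<bar> \<le> \<delta>" if "x \<in> {0..1}" for x
    using abs_Im_le_cmod[of "cis (u x) - cis (w x)"] b[OF that] by simp
  define S1 where "S1 = (\<lambda>t. sin (u t))"
  define S2 where "S2 = (\<lambda>t. sin (w t))"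
  have S1c: "continuous_on {0..1} S1" unfolding S1_def by (intro continuous_intros uc)
  have S2c: "continuous_on {0..1} S2" unfolding S2_def by (intro continuous_intros wc)
  have S1i: "S1 integrable_on {0..x}" if "x \<in> {0..1}" for x
    by (rule integrable_continuous_interval) (rule continuous_on_subset[OF S1c], use that in auto)
  have S2i: "S2 integrable_on {0..x}" if "x \<in> {0..1}" for x
    by (rule integrable_continuous_interval) (rule continuous_on_subset[OF S2c], use that in auto)
  define I1 where "I1 = (\<lambda>x. integral {0..x} S1)"
  define I2 where "I2 = (\<lambda>x. integral {0..x} S2)"
  have I1c: "continuous_on {0..1} I1" unfolding I1_def
    by (rule indefinite_integral_continuous_1[OF integrable_continuous_interval[OF S1c]])
  have I2c: "continuous_on {0..1} I2" unfolding I2_def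
    by (rule indefinite_integral_continuous_1[OF integrable_continuous_interval[OF S2c]])
  have I1b: "\<bar>I1 x\<bar> \<le> 1" if "x \<in> {0..1}" for x
    unfolding I1_def by (rule integral_bound01[OF S1c _ that]) (simp add: S1_def)
  have I12: "\<bar>I1 x - I2 x\<bar> \<le> \<delta>" if x: "x \<in> {0..1}" for x
  proof -
    have "I1 x - I2 x = integral {0..x} (\<lambda>t. S1 t - S2 t)"
      unfolding I1_def I2_def by (rule integral_diff[OF S1i[OF x] S2i[OF x], symmetric])
    also have "\<bar>\<dots>\<bar> \<le> \<delta>"
      by (rule integral_bound01[OF continuous_on_diff[OF S1c S2c] _ x]) (simp add: S1_def S2_def bs)
    finally show ?thesis .
  qed
  define M1 where "M1 = integral {0..1} I1"
  define M2 where "M2 = integral {0..1} I2"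
  have M1b: "\<bar>M1\<bar> \<le> 1" unfolding M1_def using integral_bound01[OF I1c I1b, of 1] by simp
  have M12: "\<bar>M1 - M2\<bar> \<le> \<delta>"
  proof -
    have "M1 - M2 = integral {0..1} (\<lambda>t. I1 t - I2 t)" unfolding M1_def M2_def
      by (rule integral_diff[OF integrable_continuous_interval[OF I1c] integrable_continuous_interval[OF I2c], symmetric])
    also have "\<bar>\<dots>\<bar> \<le> \<delta>"
      using integral_bound01[OF continuous_on_diff[OF I1c I2c] I12, of 1] by simp
    finally show ?thesis .
  qed
  define F1 where "F1 = (\<lambda>x. cos (u x) * (I1 x - M1))"
  define F2 where "F2 = (\<lambda>x. cos (w x) * (I2 x - M2))"
  have F1c: "continuous_on {0..1} F1" unfolding F1_def by (intro continuous_intros uc I1c)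
  have F2c: "continuous_on {0..1} F2" unfolding F2_def by (intro continuous_intros wc I2c)
  have K1u: "K1 u = integral {0..1} F1" unfolding F1_def I1_def M1_def S1_def by (rule K1_form[OF uc])
  have K1w: "K1 w = integral {0..1} F2" unfolding F2_def I2_def M2_def S2_def by (rule K1_form[OF wc])
  have pt: "\<bar>F1 x - F2 x\<bar> \<le> 4 * \<delta>" if x: "x \<in> {0..1}" for x
  proof -
    have e: "F1 x - F2 x = (cos (u x) - cos (w x)) * (I1 x - M1) + cos (w x) * ((I1 x - I2 x) - (M1 - M2))"
      unfolding F1_def F2_def by (simp add: algebra_simps)
    have t1: "\<bar>(cos (u x) - cos (w x)) * (I1 x - M1)\<bar> \<le> \<delta> * 2"
      unfolding abs_mult
      by (rule mult_mono) (use bc[OF x] I1b[OF x] M1b d0 in auto)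
    have t2: "\<bar>cos (w x) * ((I1 x - I2 x) - (M1 - M2))\<bar> \<le> 1 * (2 * \<delta>)"
      unfolding abs_mult
      by (rule mult_mono) (use I12[OF x] M12 in auto)
    show ?thesis unfolding e using t1 t2 abs_triangle_ineq[of "(cos (u x) - cos (w x)) * (I1 x - M1)"
        "cos (w x) * ((I1 x - I2 x) - (M1 - M2))"] by linarith
  qed
  have "K1 u - K1 w = integral {0..1} (\<lambda>x. F1 x - F2 x)" unfolding K1u K1w
    by (rule integral_diff[OF integrable_continuous_interval[OF F1c] integrable_continuous_interval[OF F2c], symmetric])
  also have "\<bar>\<dots>\<bar> \<le> 4 * \<delta>"
    using integral_bound01[OF continuous_on_diff[OF F1c F2c] pt, of 1] by simp
  finally show ?thesis .
qed


lemma open_U: "open_in_Sigma {u. (\<exists>k. u \<in> Sigma1 k) \<and> K1 u \<noteq> 0}"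
  unfolding open_in_Sigma_def
proof (intro conjI allI ballI)
  show "{u. (\<exists>k. u \<in> Sigma1 k) \<and> K1 u \<noteq> 0} \<subseteq> (\<Union>k. Sigma1 k)" by blast
  fix k u assume u: "u \<in> {u. (\<exists>k. u \<in> Sigma1 k) \<and> K1 u \<noteq> 0} \<inter> Sigma1 k"
  then have uS: "u \<in> Sigma1 k" and K: "K1 u \<noteq> 0" by auto
  have uL: "u \<in> Lambda1 k" using uS unfolding Sigma1_def by blast
  show "\<exists>e>0. \<forall>w\<in>Sigma1 k. Lambda1_dist k u w < e \<longrightarrow> w \<in> {u. (\<exists>k. u \<in> Sigma1 k) \<and> K1 u \<noteq> 0}"
  proof (intro exI conjI ballI impI)
    show "0 < \<bar>K1 u\<bar> / 4" using K by simp
    fix w assume wS: "w \<in> Sigma1 k" and dw: "Lambda1_dist k u w < \<bar>K1 u\<bar> / 4"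
    have wL: "w \<in> Lambda1 k" using wS unfolding Sigma1_def by blast
    have "\<bar>K1 u - K1 w\<bar> \<le> 4 * Lambda1_dist k u w"
      by (rule K1_close) (use lam_struct[OF uL] lam_struct[OF wL] dist_pt[OF uL wL] in auto)
    then have "K1 w \<noteq> 0" using dw by linarith
    then show "w \<in> {u. (\<exists>k. u \<in> Sigma1 k) \<and> K1 u \<noteq> 0}" using wS by blast
  qed
qed

lemma FTC_real:
  fixes F f :: "real \<Rightarrow> real"
  assumes d: "\<And>x. (F has_real_derivative f x) (at x)" and c: "\<And>x. isCont f x"
  shows "(LBINT x=ereal a..ereal b. f x) = F b - F a"
proof (rule interval_integral_FTC_finite)
  show "continuous_on {min a b..max a b} f" by (intro continuous_at_imp_continuous_on ballI c)
  fix x show "(F has_vector_derivative f x) (at x within {min a b..max a b})"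
    using d[of x] by (simp add: has_real_derivative_iff_has_vector_derivative[symmetric] has_field_derivative_at_within)
qed

lemma sin_sq': "sin (y::real) * sin y = 1 - cos y * cos y"
  using sin_squared_eq[of y] by (simp add: power2_eq_square)

lemma zero_H1_0: "(\<lambda>x. 0) \<in> H1_0"
proof -
  have "has_weak_deriv01 (\<lambda>x. 0::real) (\<lambda>x. 0)"
    unfolding has_weak_deriv01_def set_borel_measurable_def set_integrable_def by simp
  moreover have "int01 (\<lambda>x. 0) = 0" unfolding int01_def by simp
  ultimately show ?thesis unfolding H1_0_def H1_def by blast
qed

lemma example_nz:
  assumes k: "k \<noteq> 0"
  shows "\<exists>u\<in>Sigma1 k. K1 u \<noteq> 0"
proof -
  define \<alpha> where "\<alpha> = 2 * pi * of_int k"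
  have a0: "\<alpha> \<noteq> 0" using k unfolding \<alpha>_def by simp
  have sa: "sin \<alpha> = 0" unfolding \<alpha>_def using sin_int_2pin[of k] by simp
  have ca: "cos \<alpha> = 1" unfolding \<alpha>_def using cos_int_2pin[of k] by simp
  define u where "u = (\<lambda>x::real. 2 * pi * of_int k * x)"
  have ue: "u x = \<alpha> * x" for x unfolding u_def \<alpha>_def by simp
  have uL: "u \<in> Lambda1 k" unfolding Lambda1_def
    by (rule CollectI, rule exI[of _ "\<lambda>x. 0"], rule exI[of _ 0]) (simp add: zero_H1_0 u_def)
  have Ssin: "(LBINT x=ereal a..ereal b. sin (\<alpha> * x)) = (- cos (\<alpha> * b) / \<alpha>) - (- cos (\<alpha> * a) / \<alpha>)" for a b
    by (rule FTC_real) (use a0 in \<open>auto intro!: derivative_eq_intros continuous_intros\<close>)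
  have Scos: "(LBINT x=ereal a..ereal b. cos (\<alpha> * x)) = (sin (\<alpha> * b) / \<alpha>) - (sin (\<alpha> * a) / \<alpha>)" for a b
    by (rule FTC_real) (use a0 in \<open>auto intro!: derivative_eq_intros continuous_intros\<close>)
  have i1: "int01 (\<lambda>x. sin (u x)) = 0" unfolding ue int01_def Ssin using ca by simp
  have i2: "int01 (\<lambda>x. cos (u x)) = 0" unfolding ue int01_def Scos using sa by simp
  have uS: "u \<in> Sigma1 k" unfolding Sigma1_def using uL i1 i2 by blast
  define m where "m = int01 (\<lambda>y. LBINT t=ereal 0..ereal y. sin (u t))"
  have ad: "antideriv0 (\<lambda>t. sin (u t)) x = (1 - cos (\<alpha> * x)) / \<alpha> - m" for x
    unfolding antideriv0_def m_def[symmetric] unfolding ue Ssin using a0 by (simp add: field_simps)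
  define F where "F = (\<lambda>x. (1 / \<alpha> - m) * sin (\<alpha> * x) / \<alpha> - (x / 2 + sin (\<alpha> * x) * cos (\<alpha> * x) / (2 * \<alpha>)) / \<alpha>)"
  have "K1 u = int01 (\<lambda>x. cos (\<alpha> * x) * ((1 - cos (\<alpha> * x)) / \<alpha> - m))"
    unfolding K1_def ad unfolding ue ..
  also have "\<dots> = F 1 - F 0" unfolding int01_def
  proof (rule FTC_real)
    fix x
    show "(F has_real_derivative cos (\<alpha> * x) * ((1 - cos (\<alpha> * x)) / \<alpha> - m)) (at x)"
      unfolding F_def using a0
      by (auto intro!: derivative_eq_intros simp: field_simps sin_sq')
  qed (use a0 in \<open>auto intro!: continuous_intros\<close>)
  also have "\<dots> = - 1 / (2 * \<alpha>)" unfolding F_def using sa a0 by (simp add: field_simps)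
  finally have "K1 u \<noteq> 0" using a0 by simp
  then show ?thesis using uS by blast
qed


lemma bm_int:
  fixes h :: "real \<Rightarrow> real"
  assumes hm[measurable]: "h \<in> borel_measurable borel" and hb: "\<And>x. a \<le> x \<Longrightarrow> x \<le> b \<Longrightarrow> \<bar>h x\<bar> \<le> B" and ab: "a \<le> b"
  shows "interval_lebesgue_integrable lborel (ereal a) (ereal b) h"
proof -
  have c: "set_integrable lborel {a..b} (\<lambda>x. B)"
    by (rule borel_integrable_atLeastAtMost') (intro continuous_intros)
  have "set_integrable lborel (einterval (ereal a) (ereal b)) (\<lambda>x. B)"
    by (rule set_integrable_subset[OF c]) (auto simp: einterval_iff)
  then have "set_integrable lborel (einterval (ereal a) (ereal b)) h"
  proof (rule set_integrable_bound)
    show "set_borel_measurable lborel (einterval (ereal a) (ereal b)) h"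
      unfolding set_borel_measurable_def by measurable
    show "AE x in lborel. x \<in> einterval (ereal a) (ereal b) \<longrightarrow> norm (h x) \<le> norm B"
    proof (intro AE_I2 impI)
      fix x assume "x \<in> einterval (ereal a) (ereal b)"
      then have "a \<le> x" "x \<le> b" by (auto simp: einterval_iff)
      then have "\<bar>h x\<bar> \<le> B" by (rule hb)
      then show "norm (h x) \<le> norm B" by simp
    qed
  qed
  then show ?thesis unfolding interval_lebesgue_integrable_def using ab by simp
qed

lemma split_gen:
  fixes h :: "real \<Rightarrow> real"
  assumes "a \<le> b" "b \<le> c" "interval_lebesgue_integrable lborel (ereal a) (ereal c) h"
  shows "(LBINT x=ereal a..ereal c. h x) = (LBINT x=ereal a..ereal b. h x) + (LBINT x=ereal b..ereal c. h x)"
proof -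
  have "min (ereal a) (min (ereal b) (ereal c)) = ereal a" "max (ereal a) (max (ereal b) (ereal c)) = ereal c"
    using assms(1,2) by (auto simp: min_def max_def)
  then show ?thesis using interval_integral_sum[of "ereal a" "ereal b" "ereal c" h] assms(3) by simp
qed

lemma pcong:
  fixes h k :: "real \<Rightarrow> real"
  assumes "\<And>x. a < x \<Longrightarrow> x < b \<Longrightarrow> h x = k x" "a \<le> b"
  shows "(LBINT x=ereal a..ereal b. h x) = (LBINT x=ereal a..ereal b. k x)"
proof (rule interval_integral_cong)
  fix x assume "x \<in> einterval (min (ereal a) (ereal b)) (max (ereal a) (ereal b))"
  then have "a < x" "x < b" using assms(2) by (auto simp: einterval_iff min_def max_def)
  then show "h x = k x" by (rule assms(1))
qed

lemma K_piece:
  fixes \<alpha> \<beta> p q :: real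
  assumes a0: "\<alpha> \<noteq> 0"
  shows "(LBINT x=ereal a..ereal b. cos (\<alpha> * x + \<beta>) * (p - q * cos (\<alpha> * x + \<beta>))) =
    (p * sin (\<alpha> * b + \<beta>) / \<alpha> - q * (b / 2 + sin (\<alpha> * b + \<beta>) * cos (\<alpha> * b + \<beta>) / (2 * \<alpha>))) -
    (p * sin (\<alpha> * a + \<beta>) / \<alpha> - q * (a / 2 + sin (\<alpha> * a + \<beta>) * cos (\<alpha> * a + \<beta>) / (2 * \<alpha>)))"
proof (rule FTC_real)
  fix x
  show "((\<lambda>x. p * sin (\<alpha> * x + \<beta>) / \<alpha> - q * (x / 2 + sin (\<alpha> * x + \<beta>) * cos (\<alpha> * x + \<beta>) / (2 * \<alpha>)))
     has_real_derivative cos (\<alpha> * x + \<beta>) * (p - q * cos (\<alpha> * x + \<beta>))) (at x)"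
    using a0 by (auto intro!: derivative_eq_intros simp: field_simps sin_sq')
qed (intro continuous_intros)

lemma sin_piece:
  fixes \<alpha> \<beta> :: real
  assumes a0: "\<alpha> \<noteq> 0"
  shows "(LBINT x=ereal a..ereal b. sin (\<alpha> * x + \<beta>)) = (- cos (\<alpha> * b + \<beta>) / \<alpha>) - (- cos (\<alpha> * a + \<beta>) / \<alpha>)"
  by (rule FTC_real) (use a0 in \<open>auto intro!: derivative_eq_intros continuous_intros\<close>)

lemma cos_piece:
  fixes \<alpha> \<beta> :: real
  assumes a0: "\<alpha> \<noteq> 0"
  shows "(LBINT x=ereal a..ereal b. cos (\<alpha> * x + \<beta>)) = (sin (\<alpha> * b + \<beta>) / \<alpha>) - (sin (\<alpha> * a + \<beta>) / \<alpha>)"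
  by (rule FTC_real) (use a0 in \<open>auto intro!: derivative_eq_intros continuous_intros\<close>)

lemma cos_prod_bound: "\<bar>cos (t::real) * (p - q * cos t)\<bar> \<le> \<bar>p\<bar> + \<bar>q\<bar>"
proof -
  have c: "\<bar>cos t\<bar> \<le> 1" by simp
  have "\<bar>p - q * cos t\<bar> \<le> \<bar>p\<bar> + \<bar>q\<bar> * \<bar>cos t\<bar>"
    using abs_triangle_ineq4[of p "q * cos t"] by (simp add: abs_mult)
  also have "\<dots> \<le> \<bar>p\<bar> + \<bar>q\<bar>" using mult_left_mono[OF c, of "\<bar>q\<bar>"] by simp
  finally have b: "\<bar>p - q * cos t\<bar> \<le> \<bar>p\<bar> + \<bar>q\<bar>" .
  have "\<bar>cos t * (p - q * cos t)\<bar> = \<bar>cos t\<bar> * \<bar>p - q * cos t\<bar>" by (simp add: abs_mult)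
  also have "\<dots> \<le> 1 * (\<bar>p\<bar> + \<bar>q\<bar>)" by (rule mult_mono[OF c b]) simp_all
  finally show ?thesis by simp
qed

lemma example_zero: "\<exists>u\<in>Sigma1 0. K1 u \<noteq> 0"
proof -
  define f where "f = (\<lambda>x::real. if x \<le> 1/3 then 6 * pi * x else 3 * pi - 3 * pi * x)"
  define u where "u = (\<lambda>x. f (frac x))"
  define v where "v = (\<lambda>x. u x - pi)"
  define g where "g = (\<lambda>x::real. if x \<le> 1/3 then 6 * pi else - 3 * pi)"
  have fm[measurable]: "f \<in> borel_measurable borel" unfolding f_def by measurable
  have gm[measurable]: "g \<in> borel_measurable borel" unfolding g_def by measurable
  have uf: "u x = f x" if "x \<in> {0..1}" for x
  proof (cases "x < 1")
    case True then show ?thesis using that unfolding u_def by simp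
  next
    case False then have "x = 1" using that by simp
    then show ?thesis unfolding u_def f_def by simp
  qed
  have f0: "f 0 = 0" unfolding f_def by simp
  have fa: "f x = 6 * pi * x" if "x \<le> 1/3" for x unfolding f_def using that by simp
  have fb: "f x = 3 * pi - 3 * pi * x" if "1/3 < x" for x unfolding f_def using that by simp
  have gint: "interval_lebesgue_integrable lborel (ereal a) (ereal b) g" if "a \<le> b" for a b
    by (rule bm_int[OF gm _ that, of "6 * pi"]) (auto simp: g_def)
  have Ig: "(LBINT t=ereal 0..ereal x. g t) = f x" if x: "x \<in> {0..1}" for x
  proof (cases "x \<le> 1/3")
    case True
    have "(LBINT t=ereal 0..ereal x. g t) = (LBINT t=ereal 0..ereal x. 6 * pi)"
      by (rule pcong) (use True x in \<open>auto simp: g_def\<close>)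
    also have "\<dots> = 6 * pi * x" using interval_integral_const(2)[of "6 * pi" 0 x] by simp
    finally show ?thesis using fa[OF True] by simp
  next
    case False
    have "(LBINT t=ereal 0..ereal x. g t) = (LBINT t=ereal 0..ereal (1/3). g t) + (LBINT t=ereal (1/3)..ereal x. g t)"
      by (rule split_gen) (use False in \<open>auto intro: gint\<close>)
    also have "(LBINT t=ereal 0..ereal (1/3). g t) = (LBINT t=ereal 0..ereal (1/3). 6 * pi)"
      by (rule pcong) (auto simp: g_def)
    also have "\<dots> = 6 * pi * (1/3)" using interval_integral_const(2)[of "6 * pi" 0 "1/3"] by simp
    also have "(LBINT t=ereal (1/3)..ereal x. g t) = (LBINT t=ereal (1/3)..ereal x. - 3 * pi)"
      by (rule pcong) (use False in \<open>auto simp: g_def\<close>)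
    also have "\<dots> = - 3 * pi * (x - 1/3)" using interval_integral_const(2)[of "- 3 * pi" "1/3" x] by simp
    finally show ?thesis using fb[of x] False by (simp add: algebra_simps)
  qed
  have g2: "set_integrable lborel {0..1::real} (\<lambda>t. (g t)\<^sup>2)"
  proof -
    have c: "set_integrable lborel {0..1::real} (\<lambda>x. 36 * pi\<^sup>2)"
      by (rule borel_integrable_atLeastAtMost') (intro continuous_intros)
    then show ?thesis
    proof (rule set_integrable_bound)
      show "set_borel_measurable lborel {0..1} (\<lambda>t. (g t)\<^sup>2)"
        unfolding set_borel_measurable_def by measurable
      have "\<And>t. \<bar>(g t)\<^sup>2\<bar> \<le> \<bar>36 * pi\<^sup>2\<bar>" unfolding g_def by (simp add: power2_eq_square)
      then show "AE x in lborel. x \<in> {0..1} \<longrightarrow> norm ((g x)\<^sup>2) \<le> norm (36 * pi\<^sup>2)"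
        by (intro AE_I2 impI) (simp only: real_norm_def)
    qed
  qed
  have hw: "has_weak_deriv01 v g"
    unfolding has_weak_deriv01_def
  proof (intro conjI ballI)
    show "set_borel_measurable lborel {0..1} g" unfolding set_borel_measurable_def by measurable
    show "set_integrable lborel {0..1} (\<lambda>t. (g t)\<^sup>2)" by (rule g2)
    fix x :: real assume x: "x \<in> {0..1}"
    have "v x = f x - pi" unfolding v_def using uf[OF x] by simp
    moreover have "v 0 = - pi" unfolding v_def using uf[of 0] f0 by simp
    ultimately show "v x = v 0 + (LBINT t=ereal 0..ereal x. g t)" using Ig[OF x] by simp
  qed
  have vint: "int01 v = 0"
  proof -
    have "int01 v = int01 (\<lambda>x. f x - pi)" by (rule int01_cong) (simp add: v_def uf)
    also have "\<dots> = (LBINT x=ereal 0..ereal (1/3). f x - pi) + (LBINT x=ereal (1/3)..ereal 1. f x - pi)"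
      unfolding int01_def
    proof (rule split_gen)
      show "interval_lebesgue_integrable lborel (ereal 0) (ereal 1) (\<lambda>x. f x - pi)"
      proof (rule bm_int[of _ _ _ "10 * pi"])
        fix x :: real assume x: "0 \<le> x" "x \<le> 1"
        have p: "0 \<le> pi * x" "pi * x \<le> pi" using x by (auto intro: mult_left_le)
        have e: "6 * pi * x = 6 * (pi * x)" "3 * pi * x = 3 * (pi * x)" by simp_all
        have "f x - pi = 6 * (pi * x) - pi \<or> f x - pi = 2 * pi - 3 * (pi * x)"
          unfolding f_def e by simp
        then show "\<bar>f x - pi\<bar> \<le> 10 * pi" unfolding abs_le_iff using p pi_gt_zero by linarith
      qed auto
    qed auto
    also have "(LBINT x=ereal 0..ereal (1/3). f x - pi) = (LBINT x=ereal 0..ereal (1/3). 6 * pi * x - pi)"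
      by (rule pcong) (auto simp: fa)
    also have "\<dots> = (3 * pi * (1/3)\<^sup>2 - pi * (1/3)) - (3 * pi * 0\<^sup>2 - pi * 0)"
      by (rule FTC_real) (auto intro!: derivative_eq_intros continuous_intros simp: power2_eq_square)
    also have "(LBINT x=ereal (1/3)..ereal 1. f x - pi) = (LBINT x=ereal (1/3)..ereal 1. 2 * pi - 3 * pi * x)"
      by (rule pcong) (auto simp: fb)
    also have "\<dots> = (2 * pi * 1 - 3 * pi * 1\<^sup>2 / 2) - (2 * pi * (1/3) - 3 * pi * (1/3)\<^sup>2 / 2)"
      by (rule FTC_real) (auto intro!: derivative_eq_intros continuous_intros simp: power2_eq_square)
    finally show ?thesis by (simp add: power2_eq_square)
  qed
  have vH: "v \<in> H1_0"
    unfolding H1_0_def H1_def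
  proof (intro CollectI conjI allI exI)
    fix x :: real
    have "frac (x + 1) = frac x" by (simp add: frac_def)
    then show "v (x + 1) = v x" unfolding v_def u_def by simp
  qed (use hw vint in auto)
  have uL: "u \<in> Lambda1 0" unfolding Lambda1_def
    by (rule CollectI, rule exI[of _ v], rule exI[of _ pi], intro conjI vH allI) (simp add: v_def)
  have t1: "6 * pi * (1/3) + 0 = 2 * pi" "6 * pi * 0 + 0 = (0::real)"
    "- 3 * pi * 1 + 3 * pi = (0::real)" "- 3 * pi * (1/3) + 3 * pi = 2 * pi" by simp_all
  have fa': "f x = 6 * pi * x + 0" if "x \<le> 1/3" for x using fa[OF that] by simp
  have fb': "f x = - 3 * pi * x + 3 * pi" if "1/3 < x" for x using fb[OF that] by simp
  have sfm[measurable]: "(\<lambda>x. sin (f x)) \<in> borel_measurable borel" by measurable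
  have cfm[measurable]: "(\<lambda>x. cos (f x)) \<in> borel_measurable borel" by measurable
  have sint: "interval_lebesgue_integrable lborel (ereal a) (ereal b) (\<lambda>x. sin (f x))" if "a \<le> b" for a b
    by (rule bm_int[OF sfm _ that, of 1]) simp
  have cint: "interval_lebesgue_integrable lborel (ereal a) (ereal b) (\<lambda>x. cos (f x))" if "a \<le> b" for a b
    by (rule bm_int[OF cfm _ that, of 1]) simp
  have p6: "6 * pi \<noteq> (0::real)" and p3: "- 3 * pi \<noteq> (0::real)" by simp_all
  have S1: "(LBINT t=ereal 0..ereal x. sin (f t)) = (1 - cos (6 * pi * x)) / (6 * pi)" if "x \<le> 1/3" for x
  proof -
    have "(LBINT t=ereal 0..ereal x. sin (f t)) = (LBINT t=ereal 0..ereal x. sin (6 * pi * t + 0))"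
    proof (cases "0 \<le> x")
      case True then show ?thesis by (intro pcong) (use that in \<open>auto simp: fa'\<close>)
    next
      case False
      then have "(LBINT t=ereal x..ereal 0. sin (f t)) = (LBINT t=ereal x..ereal 0. sin (6 * pi * t + 0))"
        by (intro pcong) (use that in \<open>auto simp: fa'\<close>)
      then show ?thesis by (metis interval_integral_endpoints_reverse)
    qed
    also have "\<dots> = (1 - cos (6 * pi * x)) / (6 * pi)" unfolding sin_piece[OF p6] by (simp add: field_simps)
    finally show ?thesis .
  qed
  have S1v: "(LBINT t=ereal 0..ereal (1/3). sin (f t)) = 0" using S1[of "1/3"] t1 by simp
  have S2: "(LBINT t=ereal 0..ereal x. sin (f t)) = (cos (- 3 * pi * x + 3 * pi) - 1) / (3 * pi)" if "1/3 < x" for x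
  proof -
    have "(LBINT t=ereal 0..ereal x. sin (f t)) = (LBINT t=ereal 0..ereal (1/3). sin (f t)) + (LBINT t=ereal (1/3)..ereal x. sin (f t))"
      by (rule split_gen) (use that in \<open>auto intro: sint\<close>)
    also have "(LBINT t=ereal (1/3)..ereal x. sin (f t)) = (LBINT t=ereal (1/3)..ereal x. sin (- 3 * pi * t + 3 * pi))"
      by (intro pcong) (use that in \<open>auto simp: fb'\<close>)
    also have "\<dots> = (cos (- 3 * pi * x + 3 * pi) - 1) / (3 * pi)"
      unfolding sin_piece[OF p3] using t1 by (simp add: field_simps)
    finally show ?thesis using S1v by simp
  qed
  have i_sin: "int01 (\<lambda>x. sin (u x)) = 0"
  proof -
    have "int01 (\<lambda>x. sin (u x)) = int01 (\<lambda>x. sin (f x))" by (rule int01_cong) (simp add: uf)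
    also have "\<dots> = 0" unfolding int01_def using S2[of 1] t1 by simp
    finally show ?thesis .
  qed
  have i_cos: "int01 (\<lambda>x. cos (u x)) = 0"
  proof -
    have "int01 (\<lambda>x. cos (u x)) = int01 (\<lambda>x. cos (f x))" by (rule int01_cong) (simp add: uf)
    also have "\<dots> = (LBINT t=ereal 0..ereal (1/3). cos (f t)) + (LBINT t=ereal (1/3)..ereal 1. cos (f t))"
      unfolding int01_def by (rule split_gen) (auto intro: cint)
    also have "(LBINT t=ereal 0..ereal (1/3). cos (f t)) = (LBINT t=ereal 0..ereal (1/3). cos (6 * pi * t + 0))"
      by (intro pcong) (auto simp: fa')
    also have "\<dots> = 0" unfolding cos_piece[OF p6] using t1 by simp
    also have "(LBINT t=ereal (1/3)..ereal 1. cos (f t)) = (LBINT t=ereal (1/3)..ereal 1. cos (- 3 * pi * t + 3 * pi))"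
      by (intro pcong) (auto simp: fb')
    also have "\<dots> = 0" unfolding cos_piece[OF p3] using t1 by simp
    finally show ?thesis by simp
  qed
  have uS: "u \<in> Sigma1 0" unfolding Sigma1_def using uL i_sin i_cos by blast
  define m where "m = int01 (\<lambda>y. LBINT t=ereal 0..ereal y. sin (u t))"
  define p1 where "p1 = 1 / (6 * pi) - m"
  define q1 where "q1 = 1 / (6 * pi)"
  define p2 where "p2 = - (1 / (3 * pi)) - m"
  define q2 where "q2 = - (1 / (3 * pi))"
  define P where "P = (\<lambda>x::real. if x \<le> 1/3 then cos (6 * pi * x + 0) * (p1 - q1 * cos (6 * pi * x + 0))
     else cos (- 3 * pi * x + 3 * pi) * (p2 - q2 * cos (- 3 * pi * x + 3 * pi)))"
  have Su: "(LBINT t=ereal 0..ereal x. sin (u t)) = (LBINT t=ereal 0..ereal x. sin (f t))" if x: "x \<in> {0..1}" for x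
    by (intro pcong) (use x in \<open>auto simp: uf\<close>)
  have Kc: "K1 u = int01 P" unfolding K1_def
  proof (rule int01_cong)
    fix x :: real assume x: "x \<in> {0..1}"
    have ad: "antideriv0 (\<lambda>t. sin (u t)) x = (LBINT t=ereal 0..ereal x. sin (f t)) - m"
      unfolding antideriv0_def m_def[symmetric] Su[OF x] ..
    show "cos (u x) * antideriv0 (\<lambda>t. sin (u t)) x = P x"
    proof (cases "x \<le> 1/3")
      case True
      show ?thesis unfolding ad uf[OF x] S1[OF True] fa'[OF True] P_def p1_def q1_def using True
        by (simp add: field_simps)
    next
      case False
      then have F: "1/3 < x" by simp
      show ?thesis unfolding ad uf[OF x] S2[OF F] fb'[OF F] P_def p2_def q2_def using False
        by (simp add: field_simps)
    qed
  qed
  have Pm[measurable]: "P \<in> borel_measurable borel" unfolding P_def by measurable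
  have Pb: "\<bar>P x\<bar> \<le> (\<bar>p1\<bar> + \<bar>q1\<bar>) + (\<bar>p2\<bar> + \<bar>q2\<bar>)" for x
  proof -
    have "0 \<le> \<bar>p1\<bar> + \<bar>q1\<bar>" "0 \<le> \<bar>p2\<bar> + \<bar>q2\<bar>" by simp_all
    then show ?thesis
      unfolding P_def using cos_prod_bound[of "6 * pi * x + 0" p1 q1] cos_prod_bound[of "- 3 * pi * x + 3 * pi" p2 q2]
      by (simp split: if_split) (intro conjI impI; linarith)
  qed
  have "int01 P = (LBINT x=ereal 0..ereal (1/3). P x) + (LBINT x=ereal (1/3)..ereal 1. P x)"
    unfolding int01_def by (rule split_gen) (auto intro: bm_int[OF Pm Pb])
  also have "(LBINT x=ereal 0..ereal (1/3). P x) = (LBINT x=ereal 0..ereal (1/3). cos (6 * pi * x + 0) * (p1 - q1 * cos (6 * pi * x + 0)))"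
    by (intro pcong) (auto simp: P_def)
  also have "\<dots> = - q1 / 6" unfolding K_piece[OF p6] using t1 by simp
  also have "(LBINT x=ereal (1/3)..ereal 1. P x) = (LBINT x=ereal (1/3)..ereal 1. cos (- 3 * pi * x + 3 * pi) * (p2 - q2 * cos (- 3 * pi * x + 3 * pi)))"
    by (intro pcong) (auto simp: P_def)
  also have "\<dots> = - q2 / 3" unfolding K_piece[OF p3] using t1 by simp
  finally have "K1 u = 1 / (9 * pi) - 1 / (36 * pi)" unfolding Kc q1_def q2_def by simp
  then have "K1 u \<noteq> 0" by simp
  then show ?thesis using uS by blast
qed

lemma examples: "\<exists>u\<in>Sigma1 k. K1 u \<noteq> 0"
proof (cases "k = 0")
  case True then show ?thesis using example_zero by simp
next
  case False then show ?thesis by (rule example_nz)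
qed

theorem lemma4p2:
  shows "\<exists>U. open_in_Sigma U \<and> (\<forall>k. U \<inter> Sigma1 k \<noteq> {}) \<and> (\<forall>u\<in>U. K1 u \<noteq> 0)"
proof (intro exI conjI allI ballI)
  show "open_in_Sigma {u. (\<exists>k. u \<in> Sigma1 k) \<and> K1 u \<noteq> 0}" by (rule open_U)
  fix k
  show "{u. (\<exists>k. u \<in> Sigma1 k) \<and> K1 u \<noteq> 0} \<inter> Sigma1 k \<noteq> {}" using examples[of k] by blast
next
  fix u assume "u \<in> {u. (\<exists>k. u \<in> Sigma1 k) \<and> K1 u \<noteq> 0}"
  then show "K1 u \<noteq> 0" by blast
qed

end
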